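(* Let $X=(X(s))_{s\in\mathbb S}$, $\mathbb S\subset\mathbb R^2$, be a stationary spatial process and let $\mathcal D_X=(\mathcal D_X(s))_{s\in\mathbb S}$ be a positive damage function of $X$. For a region $\mathcal A\subset\mathbb S$ of finite positive Lebesgue measure $|\mathcal A|$ put $$L(\mathcal A,\mathcal D_X)=\frac{1}{|\mathcal A|}\int_{\mathcal A}\mathcal D_X(s)\,\mathrm ds,\qquad \mathcal R_1(\mathcal A,\mathcal D_X)=\mathrm{Var}\big(L(\mathcal A,\mathcal D_X)\big).$$ Then: (i) (invariance by translation) for every region $\mathcal A$ and every $v\in\mathbb R^2$ with $\mathcal A+v\subset\mathbb S$, $\mathcal R_1(\mathcal A+v,\mathcal D_X)=\mathcal R_1(\mathcal A,\mathcal D_X)$; (ii) (sub-additivity) for any two disjoint regions $\mathcal A_1,\mathcal A_2\subset\mathbb S$, $\mathcal R_1(\mathcal A_1\cup\mathcal A_2,\mathcal D_X)\le \mathcal R_1(\mathcal A_1,\mathcal D_X)+\mathcal R_1(\mathcal A_2,\mathcal D_X)$.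
   Context: A damage function of $X$ is a nonnegative process obtained pointwise from $X$, i.e. $\mathcal D_X(s)=g(X(s))$ for a fixed measurable function $g$ with values in $\mathbb R_+$ (for example $g(x)=(x-u)^+$); it is assumed that $\mathcal D_X$ is jointly measurable and square integrable so that the integrals and variances above are well defined. $\mathcal A+v=\{a+v:a\in\mathcal A\}$. *)

theory Defs
  imports "HOL-Probability.Probability"
begin

type_synonym point = "real \<times> real"

definition stationary_on ::
  "'a measure \<Rightarrow> point set \<Rightarrow> (point \<Rightarrow> 'a \<Rightarrow> real) \<Rightarrow> bool" where
  "stationary_on M S X \<longleftrightarrow>
     (\<forall>(n::nat) (ss::nat \<Rightarrow> point) (v::point).
        (\<forall>i<n. ss i \<in> S \<and> ss i + v \<in> S) \<longrightarrow>
        distr M (Pi\<^sub>M {..<n} (\<lambda>_. borel)) (\<lambda>\<omega>. \<lambda>i\<in>{..<n}. X (ss i) \<omega>)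
        = distr M (Pi\<^sub>M {..<n} (\<lambda>_. borel)) (\<lambda>\<omega>. \<lambda>i\<in>{..<n}. X (ss i + v) \<omega>))"

definition region :: "point set \<Rightarrow> point set \<Rightarrow> bool" where
  "region S A \<longleftrightarrow> A \<in> sets lborel \<and> A \<subseteq> S \<and>
     0 < emeasure lborel A \<and> emeasure lborel A < \<infinity>"

text \<open>Spatial average of the damage D_X(s) = g (X s) over A.\<close>
definition L_avg :: "(real \<Rightarrow> real) \<Rightarrow> (point \<Rightarrow> 'a \<Rightarrow> real) \<Rightarrow> point set \<Rightarrow> 'a \<Rightarrow> real" where
  "L_avg g X A \<omega> = (1 / measure lborel A) * (LINT s:A|lborel. g (X s \<omega>))"

definition R1 :: "'a measure \<Rightarrow> (real \<Rightarrow> real) \<Rightarrow> (point \<Rightarrow> 'a \<Rightarrow> real) \<Rightarrow> point set \<Rightarrow> real" where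
  "R1 M g X A = (LINT \<omega>|M. (L_avg g X A \<omega> - (LINT \<omega>'|M. L_avg g X A \<omega>'))\<^sup>2)"

end

theory Submission
  imports Defs
begin


definition Vr :: "'a measure \<Rightarrow> ('a \<Rightarrow> real) \<Rightarrow> real" where
  "Vr M f = (LINT \<omega>|M. (f \<omega> - (LINT \<omega>'|M. f \<omega>'))\<^sup>2)"

lemma sq_shift_int:
  fixes a :: "'a \<Rightarrow> real"
  assumes "prob_space M" "integrable M a" "integrable M (\<lambda>\<omega>. (a \<omega>)\<^sup>2)"
  shows "integrable M (\<lambda>\<omega>. (a \<omega> - c)\<^sup>2)"
proof -
  have e: "(\<lambda>\<omega>. (a \<omega> - c)\<^sup>2) = (\<lambda>\<omega>. (a \<omega>)\<^sup>2 - 2 * c * a \<omega> + c\<^sup>2)"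
    by (auto simp: power2_eq_square algebra_simps)
  have "integrable M (\<lambda>\<omega>. c\<^sup>2)" using assms(1) prob_space.finite_measure finite_measure.integrable_const by blast
  then show ?thesis unfolding e using assms by auto
qed

lemma var_formula:
  fixes a :: "'a \<Rightarrow> real"
  assumes P: "prob_space M" and "integrable M a" "integrable M (\<lambda>\<omega>. (a \<omega>)\<^sup>2)"
  shows "Vr M a = (LINT \<omega>|M. (a \<omega>)\<^sup>2) - (LINT \<omega>|M. a \<omega>)\<^sup>2"
proof -
  define m where "m = (LINT \<omega>|M. a \<omega>)"
  have e: "(\<lambda>\<omega>. (a \<omega> - m)\<^sup>2) = (\<lambda>\<omega>. ((a \<omega>)\<^sup>2 - 2 * m * a \<omega>) + m\<^sup>2)"
    by (auto simp: power2_eq_square algebra_simps)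
  have c: "integrable M (\<lambda>\<omega>. m\<^sup>2)" using assms(1) prob_space.finite_measure finite_measure.integrable_const by blast
  have "Vr M a = (LINT \<omega>|M. ((a \<omega>)\<^sup>2 - 2 * m * a \<omega>) + m\<^sup>2)" unfolding Vr_def m_def[symmetric] e ..
  also have "\<dots> = (LINT \<omega>|M. (a \<omega>)\<^sup>2) - 2 * m * m + m\<^sup>2"
    using assms c prob_space.prob_space[OF P] by (simp add: m_def)
  finally show ?thesis by (simp add: m_def power2_eq_square)
qed

lemma var_cong_AE:
  fixes a b :: "'a \<Rightarrow> real"
  assumes "a \<in> borel_measurable M" "b \<in> borel_measurable M" "AE \<omega> in M. a \<omega> = b \<omega>"
  shows "Vr M a = Vr M b"
proof -
  have "(LINT \<omega>|M. a \<omega>) = (LINT \<omega>|M. b \<omega>)" using assms by (intro integral_cong_AE) auto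
  then show ?thesis unfolding Vr_def using assms by (intro integral_cong_AE) auto
qed

lemma var_convex:
  fixes a1 a2 :: "'a \<Rightarrow> real"
  assumes P: "prob_space M" and i: "integrable M a1" "integrable M (\<lambda>\<omega>. (a1 \<omega>)\<^sup>2)"
    "integrable M a2" "integrable M (\<lambda>\<omega>. (a2 \<omega>)\<^sup>2)"
    and w: "0 \<le> w1" "0 \<le> w2" "w1 + w2 = 1"
  shows "Vr M (\<lambda>\<omega>. w1 * a1 \<omega> + w2 * a2 \<omega>) \<le> w1 * Vr M a1 + w2 * Vr M a2"
proof -
  define m1 where "m1 = (LINT \<omega>|M. a1 \<omega>)"
  define m2 where "m2 = (LINT \<omega>|M. a2 \<omega>)"
  have m: "(LINT \<omega>|M. w1 * a1 \<omega> + w2 * a2 \<omega>) = w1 * m1 + w2 * m2"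
    using i by (simp add: m1_def m2_def)
  have j1: "integrable M (\<lambda>\<omega>. (a1 \<omega> - m1)\<^sup>2)" by (rule sq_shift_int[OF P i(1,2)])
  have j2: "integrable M (\<lambda>\<omega>. (a2 \<omega> - m2)\<^sup>2)" by (rule sq_shift_int[OF P i(3,4)])
  have "Vr M (\<lambda>\<omega>. w1 * a1 \<omega> + w2 * a2 \<omega>) = (LINT \<omega>|M. (w1 * (a1 \<omega> - m1) + w2 * (a2 \<omega> - m2))\<^sup>2)"
    unfolding Vr_def m by (simp add: algebra_simps)
  also have "\<dots> \<le> (LINT \<omega>|M. w1 * (a1 \<omega> - m1)\<^sup>2 + w2 * (a2 \<omega> - m2)\<^sup>2)"
  proof (rule integral_mono')
    show "integrable M (\<lambda>\<omega>. w1 * (a1 \<omega> - m1)\<^sup>2 + w2 * (a2 \<omega> - m2)\<^sup>2)" using j1 j2 by auto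
    fix \<omega>
    have "w1 * (a1 \<omega> - m1)\<^sup>2 + w2 * (a2 \<omega> - m2)\<^sup>2 - (w1 * (a1 \<omega> - m1) + w2 * (a2 \<omega> - m2))\<^sup>2
       = w1 * w2 * ((a1 \<omega> - m1) - (a2 \<omega> - m2))\<^sup>2"
      using w(3) by algebra
    moreover have "0 \<le> w1 * w2 * ((a1 \<omega> - m1) - (a2 \<omega> - m2))\<^sup>2" using w by auto
    ultimately show "(w1 * (a1 \<omega> - m1) + w2 * (a2 \<omega> - m2))\<^sup>2 \<le> w1 * (a1 \<omega> - m1)\<^sup>2 + w2 * (a2 \<omega> - m2)\<^sup>2" by linarith
    show "0 \<le> w1 * (a1 \<omega> - m1)\<^sup>2 + w2 * (a2 \<omega> - m2)\<^sup>2" using w by auto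
  qed
  also have "\<dots> = w1 * Vr M a1 + w2 * Vr M a2"
    using j1 j2 by (simp add: Vr_def m1_def m2_def)
  finally show ?thesis .
qed



lemma trans_nn:
  fixes h :: "point \<Rightarrow> ennreal"
  assumes "h \<in> borel_measurable lborel"
  shows "(\<integral>\<^sup>+ s. h s \<partial>lborel) = (\<integral>\<^sup>+ s. h (s + v) \<partial>lborel)"
proof -
  have "(\<integral>\<^sup>+ s. h s \<partial>lborel) = (\<integral>\<^sup>+ s. h s \<partial>distr lborel borel ((+) v))"
    by (simp add: lborel_distr_plus)
  also have "\<dots> = (\<integral>\<^sup>+ s. h (v + s) \<partial>lborel)"
    using assms by (subst nn_integral_distr) auto
  finally show ?thesis by (simp add: add.commute)
qed

lemma ind_tr: "indicator ((\<lambda>a. a + v) ` (A::point set)) (s + v) = (indicator A s :: 'b::zero_neq_one)"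
  by (auto simp: indicator_def image_iff)

lemma tr_preimage: "(\<lambda>a. a + v) ` A = (\<lambda>a. a - v) -` (A::point set)"
  by (auto simp: image_iff) (metis diff_add_cancel)

lemma tr_sets: "(A::point set) \<in> sets lborel \<Longrightarrow> (\<lambda>a. a + v) ` A \<in> sets lborel"
proof -
  assume A: "A \<in> sets lborel"
  have "(\<lambda>a. a - v) -` A \<inter> space lborel \<in> sets lborel"
    using A by (intro measurable_sets[of _ lborel lborel]) auto
  then show ?thesis by (simp add: tr_preimage)
qed

lemma tr_emeasure: "(A::point set) \<in> sets lborel \<Longrightarrow> emeasure lborel ((\<lambda>a. a + v) ` A) = emeasure lborel A"
proof -
  assume A: "A \<in> sets lborel"
  have "emeasure lborel ((\<lambda>a. a + v) ` A) = (\<integral>\<^sup>+ s. indicator ((\<lambda>a. a + v) ` A) s \<partial>lborel)"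
    using tr_sets[OF A] by simp
  also have "\<dots> = (\<integral>\<^sup>+ s. indicator ((\<lambda>a. a + v) ` A) (s + v) \<partial>lborel)"
    by (rule trans_nn[of "indicator ((\<lambda>a. a + v) ` A)" v]) (use tr_sets[OF A] in auto)
  also have "\<dots> = emeasure lborel A" using A by (simp add: ind_tr)
  finally show ?thesis .
qed



context
  fixes M :: "'a measure" and S :: "point set"
    and X :: "point \<Rightarrow> 'a \<Rightarrow> real" and g :: "real \<Rightarrow> real"
  assumes P: "prob_space M"
    and Xm: "\<forall>s\<in>S. X s \<in> borel_measurable M"
    and st: "stationary_on M S X"
    and gm: "g \<in> borel_measurable borel" and g0: "\<forall>x. 0 \<le> g x"
    and fm: "(\<lambda>(s, \<omega>). indicator S s * g (X s \<omega>)) \<in> borel_measurable (lborel \<Otimes>\<^sub>M M)"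
    and sq: "\<forall>s\<in>S. integrable M (\<lambda>\<omega>. (g (X s \<omega>))\<^sup>2)"
begin

declare gm[measurable]

lemma sfM: "sigma_finite_measure M"
  using P prob_space.finite_measure finite_measure.sigma_finite_measure by blast

lemma psf: "pair_sigma_finite lborel M"
  using sfM by (simp add: pair_sigma_finite_def lborel.sigma_finite_measure_axioms)

lemma stat2:
  assumes s: "s \<in> S" "t \<in> S" "s + v \<in> S" "t + v \<in> S"
    and H: "H \<in> borel_measurable (Pi\<^sub>M {..<2::nat} (\<lambda>_. borel))"
  shows "(\<integral>\<^sup>+\<omega>. H (\<lambda>i\<in>{..<2}. X (if i = 0 then s else t) \<omega>) \<partial>M)
       = (\<integral>\<^sup>+\<omega>. H (\<lambda>i\<in>{..<2}. X ((if i = 0 then s else t) + v) \<omega>) \<partial>M)"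
proof -
  let ?ss = "\<lambda>i::nat. if i = 0 then s else t"
  have "(\<forall>i<(2::nat). ?ss i \<in> S \<and> ?ss i + v \<in> S) \<longrightarrow>
        distr M (Pi\<^sub>M {..<2} (\<lambda>_. borel)) (\<lambda>\<omega>. \<lambda>i\<in>{..<2}. X (?ss i) \<omega>)
        = distr M (Pi\<^sub>M {..<2} (\<lambda>_. borel)) (\<lambda>\<omega>. \<lambda>i\<in>{..<2}. X (?ss i + v) \<omega>)"
    using spec[where x=v, OF spec[where x="\<lambda>i::nat. if i = 0 then s else t", OF spec[where x="2::nat", OF st[unfolded stationary_on_def]]]] .
  then have D: "distr M (Pi\<^sub>M {..<2} (\<lambda>_. borel)) (\<lambda>\<omega>. \<lambda>i\<in>{..<2}. X (?ss i) \<omega>)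
        = distr M (Pi\<^sub>M {..<2} (\<lambda>_. borel)) (\<lambda>\<omega>. \<lambda>i\<in>{..<2}. X (?ss i + v) \<omega>)"
    using s by auto
  have T1: "(\<lambda>\<omega>. \<lambda>i\<in>{..<2}. X (?ss i) \<omega>) \<in> measurable M (Pi\<^sub>M {..<2} (\<lambda>_. borel))"
    by (rule measurable_restrict) (use Xm s in auto)
  have T2: "(\<lambda>\<omega>. \<lambda>i\<in>{..<2}. X (?ss i + v) \<omega>) \<in> measurable M (Pi\<^sub>M {..<2} (\<lambda>_. borel))"
    by (rule measurable_restrict) (use Xm s in auto)
  have "(\<integral>\<^sup>+\<omega>. H (\<lambda>i\<in>{..<2}. X (?ss i) \<omega>) \<partial>M)
      = (\<integral>\<^sup>+x. H x \<partial>distr M (Pi\<^sub>M {..<2} (\<lambda>_. borel)) (\<lambda>\<omega>. \<lambda>i\<in>{..<2}. X (?ss i) \<omega>))"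
    using T1 H by (subst nn_integral_distr) auto
  also have "\<dots> = (\<integral>\<^sup>+\<omega>. H (\<lambda>i\<in>{..<2}. X (?ss i + v) \<omega>) \<partial>M)"
    unfolding D using T2 H by (subst nn_integral_distr) auto
  finally show ?thesis .
qed

lemma stat_m2:
  assumes s: "s \<in> S" "t \<in> S" "s + v \<in> S" "t + v \<in> S"
  shows "(\<integral>\<^sup>+\<omega>. ennreal (g (X s \<omega>) * g (X t \<omega>)) \<partial>M)
       = (\<integral>\<^sup>+\<omega>. ennreal (g (X (s + v) \<omega>) * g (X (t + v) \<omega>)) \<partial>M)"
proof -
  have H: "(\<lambda>x::nat\<Rightarrow>real. ennreal (g (x 0) * g (x 1))) \<in> borel_measurable (Pi\<^sub>M {..<2::nat} (\<lambda>_. borel))"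
    by measurable
  show ?thesis using stat2[OF s H] by simp
qed

lemma stat_m1:
  assumes s: "s \<in> S" "s + v \<in> S"
  shows "(\<integral>\<^sup>+\<omega>. ennreal (g (X s \<omega>)) \<partial>M) = (\<integral>\<^sup>+\<omega>. ennreal (g (X (s + v) \<omega>)) \<partial>M)"
proof -
  have H: "(\<lambda>x::nat\<Rightarrow>real. ennreal (g (x 0))) \<in> borel_measurable (Pi\<^sub>M {..<2::nat} (\<lambda>_. borel))"
    by measurable
  show ?thesis using stat2[OF s(1) s(1) s(2) s(2) H] by simp
qed

lemma const_c:
  assumes "s0 \<in> S"
  shows "\<exists>c. c < \<infinity> \<and> (\<forall>s\<in>S. (\<integral>\<^sup>+\<omega>. ennreal (g (X s \<omega>) * g (X s \<omega>)) \<partial>M) = c)"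
proof (intro exI conjI ballI)
  let ?c = "(\<integral>\<^sup>+\<omega>. ennreal (g (X s0 \<omega>) * g (X s0 \<omega>)) \<partial>M)"
  have "?c = ennreal (LINT \<omega>|M. (g (X s0 \<omega>))\<^sup>2)"
    using sq assms by (simp add: power2_eq_square nn_integral_eq_integral)
  then show "?c < \<infinity>" by simp
  fix s assume s: "s \<in> S"
  show "(\<integral>\<^sup>+\<omega>. ennreal (g (X s \<omega>) * g (X s \<omega>)) \<partial>M) = ?c"
    using stat_m2[of s0 s0 "s - s0"] assms s by simp
qed


definition G :: "point set \<Rightarrow> point \<times> 'a \<Rightarrow> real" where
  "G A = (\<lambda>(s, \<omega>). indicator A s * g (X s \<omega>))"

lemma G0: "0 \<le> G A p"
  using g0 by (auto simp: G_def split: prod.splits)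

lemma Gm: assumes A: "A \<in> sets lborel" "A \<subseteq> S"
  shows "G A \<in> borel_measurable (lborel \<Otimes>\<^sub>M M)"
proof -
  have e: "G A = (\<lambda>p. indicator A (fst p) * (\<lambda>(s, \<omega>). indicator S s * g (X s \<omega>)) p)"
    using A by (auto simp: G_def indicator_def fun_eq_iff)
  have m1: "(\<lambda>p. indicator A (fst p) :: real) \<in> borel_measurable (lborel \<Otimes>\<^sub>M M)"
    using A by measurable
  show ?thesis unfolding e by (rule borel_measurable_times[OF m1 fm])
qed

lemma Gs: assumes A: "A \<in> sets lborel" "A \<subseteq> S" and w: "\<omega> \<in> space M"
  shows "(\<lambda>s. G A (s, \<omega>)) \<in> borel_measurable lborel"
  by (rule measurable_compose[OF measurable_Pair2'[OF w] Gm[OF A]])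

lemma Gw: assumes A: "A \<in> sets lborel" "A \<subseteq> S"
  shows "(\<lambda>\<omega>. G A (s, \<omega>)) \<in> borel_measurable M"
  by (rule measurable_compose[OF measurable_Pair1' Gm[OF A]]) simp

definition II :: "point set \<Rightarrow> 'a \<Rightarrow> ennreal" where
  "II A \<omega> = (\<integral>\<^sup>+ s. ennreal (G A (s, \<omega>)) \<partial>lborel)"

definition K1 :: "point set \<Rightarrow> point \<Rightarrow> ennreal" where
  "K1 A s = (\<integral>\<^sup>+ \<omega>. ennreal (G A (s, \<omega>)) \<partial>M)"

definition K2 :: "point set \<Rightarrow> point \<Rightarrow> point \<Rightarrow> ennreal" where
  "K2 A s t = (\<integral>\<^sup>+ \<omega>. ennreal (G A (s, \<omega>) * G A (t, \<omega>)) \<partial>M)"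

lemma IIm: assumes A: "A \<in> sets lborel" "A \<subseteq> S"
  shows "II A \<in> borel_measurable M"
proof -
  note [measurable] = Gm[OF A]
  show ?thesis unfolding II_def
    by (rule lborel.borel_measurable_nn_integral[where f="\<lambda>\<omega> s. ennreal (G A (s, \<omega>))"]) measurable
qed

lemma E1: assumes A: "A \<in> sets lborel" "A \<subseteq> S"
  shows "(\<integral>\<^sup>+ \<omega>. II A \<omega> \<partial>M) = (\<integral>\<^sup>+ s. K1 A s \<partial>lborel)"
proof -
  note [measurable] = Gm[OF A]
  have m: "(\<lambda>p. ennreal (G A p)) \<in> borel_measurable (lborel \<Otimes>\<^sub>M M)" by measurable
  show ?thesis unfolding II_def K1_def
    using pair_sigma_finite.Fubini[OF psf m] by simp
qed

lemma E2: assumes A: "A \<in> sets lborel" "A \<subseteq> S"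
  shows "(\<integral>\<^sup>+ \<omega>. (II A \<omega>)\<^sup>2 \<partial>M) = (\<integral>\<^sup>+ s. \<integral>\<^sup>+ t. K2 A s t \<partial>lborel \<partial>lborel)"
proof -
  note [measurable] = Gm[OF A]
  have a: "(II A \<omega>)\<^sup>2 = (\<integral>\<^sup>+ s. \<integral>\<^sup>+ t. ennreal (G A (s, \<omega>) * G A (t, \<omega>)) \<partial>lborel \<partial>lborel)"
    if w: "\<omega> \<in> space M" for \<omega>
  proof -
    note [measurable] = Gs[OF A w]
    have "(II A \<omega>)\<^sup>2 = (\<integral>\<^sup>+ s. ennreal (G A (s, \<omega>)) * II A \<omega> \<partial>lborel)"
      unfolding power2_eq_square by (subst nn_integral_multc) (auto simp: II_def)
    also have "\<dots> = (\<integral>\<^sup>+ s. \<integral>\<^sup>+ t. ennreal (G A (s, \<omega>)) * ennreal (G A (t, \<omega>)) \<partial>lborel \<partial>lborel)"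
      unfolding II_def by (intro nn_integral_cong, subst nn_integral_cmult) auto
    also have "\<dots> = (\<integral>\<^sup>+ s. \<integral>\<^sup>+ t. ennreal (G A (s, \<omega>) * G A (t, \<omega>)) \<partial>lborel \<partial>lborel)"
      by (simp add: ennreal_mult G0)
    finally show ?thesis .
  qed
  have mb: "(\<lambda>p. \<integral>\<^sup>+ t. ennreal (G A p * G A (t, snd p)) \<partial>lborel) \<in> borel_measurable (lborel \<Otimes>\<^sub>M M)"
    by (rule lborel.borel_measurable_nn_integral[where f="\<lambda>p t. ennreal (G A p * G A (t, snd p))"]) measurable
  have "(\<integral>\<^sup>+ \<omega>. (II A \<omega>)\<^sup>2 \<partial>M) = (\<integral>\<^sup>+ \<omega>. \<integral>\<^sup>+ s. \<integral>\<^sup>+ t. ennreal (G A (s, \<omega>) * G A (t, \<omega>)) \<partial>lborel \<partial>lborel \<partial>M)"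
    by (intro nn_integral_cong) (simp add: a)
  also have "\<dots> = (\<integral>\<^sup>+ s. \<integral>\<^sup>+ \<omega>. \<integral>\<^sup>+ t. ennreal (G A (s, \<omega>) * G A (t, \<omega>)) \<partial>lborel \<partial>M \<partial>lborel)"
    using pair_sigma_finite.Fubini[OF psf mb] by simp
  also have "\<dots> = (\<integral>\<^sup>+ s. \<integral>\<^sup>+ t. K2 A s t \<partial>lborel \<partial>lborel)"
  proof (intro nn_integral_cong)
    fix s
    have mc: "(\<lambda>p. ennreal (G A (s, snd p) * G A p)) \<in> borel_measurable (lborel \<Otimes>\<^sub>M M)" by measurable
    show "(\<integral>\<^sup>+ \<omega>. \<integral>\<^sup>+ t. ennreal (G A (s, \<omega>) * G A (t, \<omega>)) \<partial>lborel \<partial>M) = (\<integral>\<^sup>+ t. K2 A s t \<partial>lborel)"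
      using pair_sigma_finite.Fubini[OF psf mc] by (simp add: K2_def)
  qed
  finally show ?thesis .
qed


lemma K1m: assumes A: "A \<in> sets lborel" "A \<subseteq> S"
  shows "K1 A \<in> borel_measurable lborel"
proof -
  note [measurable] = Gm[OF A]
  show ?thesis unfolding K1_def[abs_def]
    by (rule sigma_finite_measure.borel_measurable_nn_integral[OF sfM, where f="\<lambda>s \<omega>. ennreal (G A (s, \<omega>))"]) measurable
qed

lemma K2m1: assumes A: "A \<in> sets lborel" "A \<subseteq> S"
  shows "K2 A s \<in> borel_measurable lborel"
proof -
  note [measurable] = Gm[OF A]
  show ?thesis unfolding K2_def[abs_def]
    by (rule sigma_finite_measure.borel_measurable_nn_integral[OF sfM, where f="\<lambda>t \<omega>. ennreal (G A (s, \<omega>) * G A (t, \<omega>))"]) measurable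
qed

lemma K2m2: assumes A: "A \<in> sets lborel" "A \<subseteq> S"
  shows "(\<lambda>s. \<integral>\<^sup>+ t. K2 A s t \<partial>lborel) \<in> borel_measurable lborel"
proof -
  note [measurable] = Gm[OF A]
  have "(\<lambda>q. K2 A (fst q) (snd q)) \<in> borel_measurable (lborel \<Otimes>\<^sub>M lborel)"
    unfolding K2_def
    by (rule sigma_finite_measure.borel_measurable_nn_integral[OF sfM, where f="\<lambda>q \<omega>. ennreal (G A (fst q, \<omega>) * G A (snd q, \<omega>))"]) measurable
  then show ?thesis
    by (intro lborel.borel_measurable_nn_integral[where f="\<lambda>s t. K2 A s t"]) (simp add: split_beta')
qed

lemma Gtr: "G ((\<lambda>a. a + v) ` A) (s + v, \<omega>) = indicator A s * g (X (s + v) \<omega>)"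
  by (simp add: G_def ind_tr)

lemma K1_tr: assumes "A \<subseteq> S" "(\<lambda>a. a + v) ` A \<subseteq> S"
  shows "K1 ((\<lambda>a. a + v) ` A) (s + v) = K1 A s"
proof (cases "s \<in> A")
  case True
  then have "s \<in> S" "s + v \<in> S" using assms by auto
  then show ?thesis using True stat_m1[of s v] by (simp add: K1_def Gtr) (simp add: G_def)
qed (simp add: K1_def Gtr G_def[of A])

lemma K2_tr: assumes "A \<subseteq> S" "(\<lambda>a. a + v) ` A \<subseteq> S"
  shows "K2 ((\<lambda>a. a + v) ` A) (s + v) (t + v) = K2 A s t"
proof (cases "s \<in> A \<and> t \<in> A")
  case True
  then have "s \<in> S" "s + v \<in> S" "t \<in> S" "t + v \<in> S" using assms by auto
  then show ?thesis using True stat_m2[of s t v] by (simp add: K2_def Gtr) (simp add: G_def)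
qed (auto simp add: K2_def Gtr G_def[of A])

lemma J1_tr: assumes A: "A \<in> sets lborel" "A \<subseteq> S" and B: "(\<lambda>a. a + v) ` A \<subseteq> S"
  shows "(\<integral>\<^sup>+ s. K1 ((\<lambda>a. a + v) ` A) s \<partial>lborel) = (\<integral>\<^sup>+ s. K1 A s \<partial>lborel)"
  using trans_nn[OF K1m[OF tr_sets[OF A(1)] B], of v] K1_tr[OF A(2) B] by simp

lemma J2_tr: assumes A: "A \<in> sets lborel" "A \<subseteq> S" and B: "(\<lambda>a. a + v) ` A \<subseteq> S"
  shows "(\<integral>\<^sup>+ s. \<integral>\<^sup>+ t. K2 ((\<lambda>a. a + v) ` A) s t \<partial>lborel \<partial>lborel) = (\<integral>\<^sup>+ s. \<integral>\<^sup>+ t. K2 A s t \<partial>lborel \<partial>lborel)"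
proof -
  let ?B = "(\<lambda>a. a + v) ` A"
  have "(\<integral>\<^sup>+ s. \<integral>\<^sup>+ t. K2 ?B s t \<partial>lborel \<partial>lborel) = (\<integral>\<^sup>+ s. \<integral>\<^sup>+ t. K2 ?B (s + v) t \<partial>lborel \<partial>lborel)"
    by (rule trans_nn[OF K2m2[OF tr_sets[OF A(1)] B]])
  also have "\<dots> = (\<integral>\<^sup>+ s. \<integral>\<^sup>+ t. K2 ?B (s + v) (t + v) \<partial>lborel \<partial>lborel)"
    by (intro nn_integral_cong trans_nn K2m1[OF tr_sets[OF A(1)] B])
  also have "\<dots> = (\<integral>\<^sup>+ s. \<integral>\<^sup>+ t. K2 A s t \<partial>lborel \<partial>lborel)"
    by (simp add: K2_tr[OF A(2) B])
  finally show ?thesis .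
qed

lemma real_le1: "(x::real) \<le> 1 + x * x"
proof -
  have "0 \<le> (x - 1) * (x - 1)" by simp
  then have h: "x * 2 \<le> 1 + x * x" by (simp add: algebra_simps)
  have "0 \<le> x * x" by simp
  then show ?thesis using h by (cases "0 \<le> x") linarith+
qed

lemma real_le2: "(x::real) * y \<le> x * x + y * y"
proof -
  have "0 \<le> (x - y) * (x - y)" by simp
  then have h: "x * (y * 2) \<le> x * x + y * y" by (simp add: algebra_simps)
  have "0 \<le> x * x" "0 \<le> y * y" by simp_all
  then show ?thesis using h by (cases "0 \<le> x * y") linarith+
qed

lemma fin: assumes R: "region S A"
  shows "(\<integral>\<^sup>+ s. K1 A s \<partial>lborel) < \<infinity>" "(\<integral>\<^sup>+ s. \<integral>\<^sup>+ t. K2 A s t \<partial>lborel \<partial>lborel) < \<infinity>"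
proof -
  have A: "A \<in> sets lborel" "A \<subseteq> S" "0 < emeasure lborel A" "emeasure lborel A < \<infinity>"
    using R by (auto simp: region_def)
  have "A \<noteq> {}" using A(3) by auto
  then obtain s0 where "s0 \<in> A" by auto
  then obtain c where c: "c < \<infinity>" "\<And>s. s \<in> S \<Longrightarrow> (\<integral>\<^sup>+\<omega>. ennreal (g (X s \<omega>) * g (X s \<omega>)) \<partial>M) = c"
    using const_c[of s0] A(2) by blast
  have sp: "emeasure M (space M) = 1" using P prob_space.emeasure_space_1 by blast
  have gX: "(\<lambda>\<omega>. g (X s \<omega>)) \<in> borel_measurable M" if "s \<in> S" for s
    using measurable_compose[of "X s" M borel g borel] Xm that gm by blast
  have b1: "K1 A s \<le> (1 + c) * indicator A s" for s
  proof (cases "s \<in> A")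
    case True
    then have s: "s \<in> S" using A by auto
    have "K1 A s = (\<integral>\<^sup>+\<omega>. ennreal (g (X s \<omega>)) \<partial>M)" using True by (simp add: K1_def G_def)
    also have "\<dots> \<le> (\<integral>\<^sup>+\<omega>. 1 + ennreal (g (X s \<omega>) * g (X s \<omega>)) \<partial>M)"
    proof (intro nn_integral_mono)
      fix \<omega>
      have "ennreal (g (X s \<omega>)) \<le> ennreal (1 + g (X s \<omega>) * g (X s \<omega>))"
        using real_le1 by (intro ennreal_leI) auto
      also have "\<dots> = 1 + ennreal (g (X s \<omega>) * g (X s \<omega>))"
        using g0 by (subst ennreal_plus) auto
      finally show "ennreal (g (X s \<omega>)) \<le> 1 + ennreal (g (X s \<omega>) * g (X s \<omega>))" .
    qed
    also have "\<dots> = 1 + c"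
      using gX[OF s] c(2)[OF s] sp by (subst nn_integral_add) auto
    finally show ?thesis using True by simp
  qed (simp add: K1_def G_def)
  have "(\<integral>\<^sup>+ s. K1 A s \<partial>lborel) \<le> (\<integral>\<^sup>+ s. (1 + c) * indicator A s \<partial>lborel)"
    by (intro nn_integral_mono b1)
  also have "\<dots> = (1 + c) * emeasure lborel A" by (rule nn_integral_cmult_indicator) (use A in auto)
  also have "\<dots> < \<infinity>" using c A by (simp add: ennreal_mult_less_top)
  finally show "(\<integral>\<^sup>+ s. K1 A s \<partial>lborel) < \<infinity>" .
  have b2: "K2 A s t \<le> ((c + c) * indicator A s) * indicator A t" for s t
  proof (cases "s \<in> A \<and> t \<in> A")
    case True
    then have s: "s \<in> S" "t \<in> S" using A by auto
    have "K2 A s t = (\<integral>\<^sup>+\<omega>. ennreal (g (X s \<omega>) * g (X t \<omega>)) \<partial>M)" using True by (simp add: K2_def G_def)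
    also have "\<dots> \<le> (\<integral>\<^sup>+\<omega>. ennreal (g (X s \<omega>) * g (X s \<omega>)) + ennreal (g (X t \<omega>) * g (X t \<omega>)) \<partial>M)"
    proof (intro nn_integral_mono)
      fix \<omega>
      have "ennreal (g (X s \<omega>) * g (X t \<omega>)) \<le> ennreal (g (X s \<omega>) * g (X s \<omega>) + g (X t \<omega>) * g (X t \<omega>))"
        using real_le2 by (intro ennreal_leI) auto
      also have "\<dots> = ennreal (g (X s \<omega>) * g (X s \<omega>)) + ennreal (g (X t \<omega>) * g (X t \<omega>))"
        using g0 by (subst ennreal_plus) auto
      finally show "ennreal (g (X s \<omega>) * g (X t \<omega>)) \<le> ennreal (g (X s \<omega>) * g (X s \<omega>)) + ennreal (g (X t \<omega>) * g (X t \<omega>))" .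
    qed
    also have "\<dots> = c + c"
      using gX[OF s(1)] gX[OF s(2)] c(2)[OF s(1)] c(2)[OF s(2)] by (subst nn_integral_add) auto
    finally show ?thesis using True by simp
  qed (auto simp add: K2_def G_def)
  have "(\<integral>\<^sup>+ s. \<integral>\<^sup>+ t. K2 A s t \<partial>lborel \<partial>lborel) \<le> (\<integral>\<^sup>+ s. \<integral>\<^sup>+ t. ((c + c) * indicator A s) * indicator A t \<partial>lborel \<partial>lborel)"
    by (intro nn_integral_mono b2)
  also have "\<dots> = (\<integral>\<^sup>+ s. ((c + c) * emeasure lborel A) * indicator A s \<partial>lborel)"
  proof (intro nn_integral_cong)
    fix s
    show "(\<integral>\<^sup>+ t. ((c + c) * indicator A s) * indicator A t \<partial>lborel) = ((c + c) * emeasure lborel A) * indicator A s"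
      using nn_integral_cmult_indicator[of A lborel "(c + c) * indicator A s"] A by (simp add: mult_ac)
  qed
  also have "\<dots> = ((c + c) * emeasure lborel A) * emeasure lborel A" by (rule nn_integral_cmult_indicator) (use A in auto)
  also have "\<dots> < \<infinity>" using c A by (simp add: ennreal_mult_less_top)
  finally show "(\<integral>\<^sup>+ s. \<integral>\<^sup>+ t. K2 A s t \<partial>lborel \<partial>lborel) < \<infinity>" .
qed


lemma regionD: assumes "region S A"
  shows "A \<in> sets lborel" "A \<subseteq> S" "0 < measure lborel A" "emeasure lborel A = ennreal (measure lborel A)"
proof -
  show A: "A \<in> sets lborel" "A \<subseteq> S" using assms by (auto simp: region_def)
  have f: "emeasure lborel A \<noteq> \<infinity>" "0 < emeasure lborel A" using assms by (auto simp: region_def)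
  show e: "emeasure lborel A = ennreal (measure lborel A)" using emeasure_eq_ennreal_measure[of lborel A] f(1) by (simp add: top_unique)
  show "0 < measure lborel A" using f(2) unfolding e by simp
qed

lemma Lavg: assumes R: "region S A" and w: "\<omega> \<in> space M"
  shows "L_avg g X A \<omega> = enn2real (II A \<omega>) / measure lborel A"
proof -
  have "(LINT s:A|lborel. g (X s \<omega>)) = (\<integral> s. G A (s, \<omega>) \<partial>lborel)"
    unfolding set_lebesgue_integral_def by (simp add: G_def)
  also have "\<dots> = enn2real (II A \<omega>)" unfolding II_def
    by (rule integral_eq_nn_integral[OF Gs[OF regionD(1,2)[OF R] w]]) (simp add: G0)
  finally show ?thesis by (simp add: L_avg_def)
qed

lemma rint: assumes R: "region S A"
  shows "(\<lambda>\<omega>. enn2real (II A \<omega>)) \<in> borel_measurable M"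
    "integrable M (\<lambda>\<omega>. enn2real (II A \<omega>))"
    "integrable M (\<lambda>\<omega>. (enn2real (II A \<omega>))\<^sup>2)"
    "(LINT \<omega>|M. enn2real (II A \<omega>)) = enn2real (\<integral>\<^sup>+ s. K1 A s \<partial>lborel)"
    "(LINT \<omega>|M. (enn2real (II A \<omega>))\<^sup>2) = enn2real (\<integral>\<^sup>+ s. \<integral>\<^sup>+ t. K2 A s t \<partial>lborel \<partial>lborel)"
proof -
  note A = regionD[OF R]
  have m: "II A \<in> borel_measurable M" by (rule IIm[OF A(1,2)])
  then show m': "(\<lambda>\<omega>. enn2real (II A \<omega>)) \<in> borel_measurable M" by measurable
  have AEf: "AE \<omega> in M. II A \<omega> \<noteq> \<infinity>"
    using fin(1)[OF R] E1[OF A(1,2)] by (intro nn_integral_PInf_AE[OF m]) auto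
  have n1: "(\<integral>\<^sup>+ \<omega>. ennreal (enn2real (II A \<omega>)) \<partial>M) = (\<integral>\<^sup>+ s. K1 A s \<partial>lborel)"
    unfolding E1[OF A(1,2), symmetric] using AEf
    by (intro nn_integral_cong_AE) (auto simp: less_top)
  have n2: "(\<integral>\<^sup>+ \<omega>. ennreal ((enn2real (II A \<omega>))\<^sup>2) \<partial>M) = (\<integral>\<^sup>+ s. \<integral>\<^sup>+ t. K2 A s t \<partial>lborel \<partial>lborel)"
    unfolding E2[OF A(1,2), symmetric] using AEf
    by (intro nn_integral_cong_AE) (auto simp: less_top ennreal_power[symmetric])
  show "integrable M (\<lambda>\<omega>. enn2real (II A \<omega>))"
    using fin(1)[OF R] n1 m' by (intro integrableI_nonneg) auto
  show "integrable M (\<lambda>\<omega>. (enn2real (II A \<omega>))\<^sup>2)"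
    using fin(2)[OF R] n2 m' by (intro integrableI_nonneg) auto
  show "(LINT \<omega>|M. enn2real (II A \<omega>)) = enn2real (\<integral>\<^sup>+ s. K1 A s \<partial>lborel)"
    using m' by (subst integral_eq_nn_integral) (auto simp: n1)
  show "(LINT \<omega>|M. (enn2real (II A \<omega>))\<^sup>2) = enn2real (\<integral>\<^sup>+ s. \<integral>\<^sup>+ t. K2 A s t \<partial>lborel \<partial>lborel)"
    using m' by (subst integral_eq_nn_integral) (auto simp: n2)
qed

lemma R1_Vr: assumes R: "region S A"
  shows "R1 M g X A = Vr M (\<lambda>\<omega>. enn2real (II A \<omega>) / measure lborel A)"
proof -
  have "(LINT \<omega>|M. L_avg g X A \<omega>) = (LINT \<omega>|M. enn2real (II A \<omega>) / measure lborel A)"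
    by (intro Bochner_Integration.integral_cong) (auto simp: Lavg[OF R])
  then show ?thesis unfolding R1_def Vr_def
    by (intro Bochner_Integration.integral_cong) (auto simp: Lavg[OF R])
qed

lemma R1_form: assumes R: "region S A"
  shows "R1 M g X A = enn2real (\<integral>\<^sup>+ s. \<integral>\<^sup>+ t. K2 A s t \<partial>lborel \<partial>lborel) / (measure lborel A)\<^sup>2
      - (enn2real (\<integral>\<^sup>+ s. K1 A s \<partial>lborel) / measure lborel A)\<^sup>2"
proof -
  note r = rint[OF R]
  have i2: "integrable M (\<lambda>\<omega>. (enn2real (II A \<omega>) / measure lborel A)\<^sup>2)"
    using r(3) by (simp add: power_divide)
  show ?thesis unfolding R1_Vr[OF R] using var_formula[OF P _ i2] r
    by (simp add: power_divide)
qed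


lemma part_i: assumes R: "region S A" and B: "(\<lambda>a. a + v) ` A \<subseteq> S"
  shows "R1 M g X ((\<lambda>a. a + v) ` A) = R1 M g X A"
proof -
  note A = regionD[OF R]
  have e: "emeasure lborel ((\<lambda>a. a + v) ` A) = emeasure lborel A" by (rule tr_emeasure[OF A(1)])
  have RB: "region S ((\<lambda>a. a + v) ` A)"
    using R B tr_sets[OF A(1)] e by (simp add: region_def)
  have m: "measure lborel ((\<lambda>a. a + v) ` A) = measure lborel A" by (simp add: measure_def e)
  show ?thesis unfolding R1_form[OF RB] R1_form[OF R] m J1_tr[OF A(1,2) B] J2_tr[OF A(1,2) B] ..
qed

lemma part_ii: assumes R1': "region S A1" and R2': "region S A2" and D: "A1 \<inter> A2 = {}"
  shows "R1 M g X (A1 \<union> A2) \<le> R1 M g X A1 + R1 M g X A2"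
proof -
  note a1 = regionD[OF R1'] and a2 = regionD[OF R2']
  have R: "region S (A1 \<union> A2)"
  proof -
    have "emeasure lborel (A1 \<union> A2) \<le> emeasure lborel A1 + emeasure lborel A2"
      using a1 a2 by (intro emeasure_subadditive) auto
    also have "\<dots> < \<infinity>" using a1(4) a2(4) by simp
    finally have "emeasure lborel (A1 \<union> A2) < \<infinity>" .
    moreover have "emeasure lborel A1 \<le> emeasure lborel (A1 \<union> A2)"
      using a1 a2 by (intro emeasure_mono) auto
    moreover have "0 < emeasure lborel A1" using R1' by (simp add: region_def)
    ultimately have "0 < emeasure lborel (A1 \<union> A2)" "emeasure lborel (A1 \<union> A2) < \<infinity>"
      using less_le_trans by blast+
    then show ?thesis using a1(1,2) a2(1,2) by (simp add: region_def)
  qed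
  note a = regionD[OF R]
  define m1 where "m1 = measure lborel A1"
  define m2 where "m2 = measure lborel A2"
  have mU: "measure lborel (A1 \<union> A2) = m1 + m2"
    unfolding m1_def m2_def using a1 a2 D by (intro measure_Union) auto
  have p: "0 < m1" "0 < m2" using a1(3) a2(3) by (auto simp: m1_def m2_def)
  note r = rint[OF R] and r1 = rint[OF R1'] and r2 = rint[OF R2']
  have IIadd: "II (A1 \<union> A2) \<omega> = II A1 \<omega> + II A2 \<omega>" if w: "\<omega> \<in> space M" for \<omega>
  proof -
    have "II (A1 \<union> A2) \<omega> = (\<integral>\<^sup>+ s. ennreal (G A1 (s, \<omega>)) + ennreal (G A2 (s, \<omega>)) \<partial>lborel)"
      unfolding II_def
    proof (intro nn_integral_cong)
      fix s
      have "G (A1 \<union> A2) (s, \<omega>) = G A1 (s, \<omega>) + G A2 (s, \<omega>)"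
        using D by (auto simp: G_def indicator_def)
      then show "ennreal (G (A1 \<union> A2) (s, \<omega>)) = ennreal (G A1 (s, \<omega>)) + ennreal (G A2 (s, \<omega>))"
        by (simp add: ennreal_plus G0)
    qed
    also have "\<dots> = II A1 \<omega> + II A2 \<omega>" unfolding II_def
      using Gs[OF a1(1,2) w] Gs[OF a2(1,2) w] by (intro nn_integral_add) auto
    finally show ?thesis .
  qed
  have AEf: "AE \<omega> in M. II A \<omega> \<noteq> \<infinity>" if RA: "region S A" for A
    using fin(1)[OF RA] E1[OF regionD(1,2)[OF RA]]
    by (intro nn_integral_PInf_AE[OF IIm[OF regionD(1,2)[OF RA]]]) auto
  have AEe: "AE \<omega> in M. enn2real (II (A1 \<union> A2) \<omega>) / measure lborel (A1 \<union> A2)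
     = (m1 / (m1 + m2)) * (enn2real (II A1 \<omega>) / m1) + (m2 / (m1 + m2)) * (enn2real (II A2 \<omega>) / m2)"
    using AE_space AEf[OF R1'] AEf[OF R2']
  proof (eventually_elim)
    case (elim \<omega>)
    have w: "(x + y) / (m1 + m2) = (m1 / (m1 + m2)) * (x / m1) + (m2 / (m1 + m2)) * (y / m2)" for x y
    proof -
      have "m1 + m2 \<noteq> 0" "m1 \<noteq> 0" "m2 \<noteq> 0" using p by auto
      then have "(m1 / (m1 + m2)) * (x / m1) = x / (m1 + m2)" "(m2 / (m1 + m2)) * (y / m2) = y / (m1 + m2)"
        by (simp_all add: field_simps)
      then show ?thesis by (simp add: add_divide_distrib)
    qed
    show ?case using IIadd[OF elim(1)] elim(2,3) unfolding mU w[symmetric]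
      by (simp add: enn2real_plus less_top)
  qed
  have "R1 M g X (A1 \<union> A2) = Vr M (\<lambda>\<omega>. (m1 / (m1 + m2)) * (enn2real (II A1 \<omega>) / m1) + (m2 / (m1 + m2)) * (enn2real (II A2 \<omega>) / m2))"
    unfolding R1_Vr[OF R] using r(1) r1(1) r2(1) AEe by (intro var_cong_AE) auto
  also have "\<dots> \<le> (m1 / (m1 + m2)) * Vr M (\<lambda>\<omega>. enn2real (II A1 \<omega>) / m1) + (m2 / (m1 + m2)) * Vr M (\<lambda>\<omega>. enn2real (II A2 \<omega>) / m2)"
  proof -
    have ws: "m1 / (m1 + m2) + m2 / (m1 + m2) = 1" using p by (simp add: add_divide_distrib[symmetric])
    show ?thesis using p r1(2,3) r2(2,3) ws by (intro var_convex[OF P]) (auto simp: power_divide)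
  qed
  also have "\<dots> \<le> Vr M (\<lambda>\<omega>. enn2real (II A1 \<omega>) / m1) + Vr M (\<lambda>\<omega>. enn2real (II A2 \<omega>) / m2)"
  proof (intro add_mono mult_left_le_one_le)
    show "0 \<le> Vr M (\<lambda>\<omega>. enn2real (II A1 \<omega>) / m1)" "0 \<le> Vr M (\<lambda>\<omega>. enn2real (II A2 \<omega>) / m2)"
      unfolding Vr_def by simp_all
  qed (use p in auto)
  also have "\<dots> = R1 M g X A1 + R1 M g X A2"
    unfolding R1_Vr[OF R1'] R1_Vr[OF R2'] m1_def m2_def ..
  finally show ?thesis .
qed

end

theorem theorem1:
  fixes M :: "'a measure" and S :: "point set"
    and X :: "point \<Rightarrow> 'a \<Rightarrow> real" and g :: "real \<Rightarrow> real"
  assumes "prob_space M"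
    and "\<forall>s\<in>S. X s \<in> borel_measurable M"
    and "stationary_on M S X"
    and "g \<in> borel_measurable borel" and "\<forall>x. 0 \<le> g x"
    and "(\<lambda>(s, \<omega>). indicator S s * g (X s \<omega>)) \<in> borel_measurable (lborel \<Otimes>\<^sub>M M)"
    and "\<forall>s\<in>S. integrable M (\<lambda>\<omega>. (g (X s \<omega>))\<^sup>2)"
  shows "(\<forall>A v. region S A \<and> (\<lambda>a. a + v) ` A \<subseteq> S \<longrightarrow>
            R1 M g X ((\<lambda>a. a + v) ` A) = R1 M g X A)
       \<and> (\<forall>A1 A2. region S A1 \<and> region S A2 \<and> A1 \<inter> A2 = {} \<longrightarrow>
            R1 M g X (A1 \<union> A2) \<le> R1 M g X A1 + R1 M g X A2)"
  using part_i[OF assms] part_ii[OF assms] by blast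

end
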